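(* Let $d\in\mathbb{Z}$, $d>0$. Every rational solution $(x,y)\in\mathbb{Q}^2$ with $x\neq0$, $y\neq0$ of $$y^2=x^3-d^2x$$ is of one of the forms $$(x_1,y_1)=\left(d\frac{m+e}{m-e},\ \pm2\sqrt{d\frac{em}{m^2-e^2}}\; d\frac{m+e}{m-e}\right),\qquad (x_2,y_2)=\left(-d\frac{m-e}{m+e},\ \mp2\sqrt{d\frac{em}{m^2-e^2}}\; d\frac{m-e}{m+e}\right),$$ where $e,m\in\mathbb{N}$, $m>e$, $\gcd(m,e)=1$, and there exist $k,j\in\mathbb{N}$ with $$d=\left(\frac{k}{2j}\right)^2\frac{m^2-e^2}{em}.$$ *)

theory Defs
  imports Complex_Main
begin

end

theory Submission
  imports Defs
begin

lemma rat_frac_nat: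
  assumes "0 < r" "r < 1"
  shows "\<exists>e m :: nat. 0 < e \<and> e < m \<and> gcd m e = 1 \<and> real_of_rat r = real e / real m"
proof -
  obtain a b where q: "quotient_of r = (a, b)" by (cases "quotient_of r") auto
  have rb: "r = of_int a / of_int b" using quotient_of_div[OF q] .
  have b0: "b > 0" using quotient_of_denom_pos[OF q] .
  have cop: "coprime a b" using quotient_of_coprime[OF q] .
  have a0: "a > 0" using assms rb b0 by (simp add: zero_less_divide_iff)
  have ab: "a < b" using assms rb b0 by (simp add: divide_less_eq)
  have "gcd (nat b) (nat a) = 1" using cop a0 b0
    by (metis coprime_commute coprime_iff_gcd_eq_1 gcd_int_def int_nat_eq nat_int nat_one_as_int abs_of_pos)
  moreover have "real_of_rat r = real (nat a) / real (nat b)"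
    using rb a0 b0 by (simp add: of_rat_divide)
  ultimately show ?thesis using a0 ab by (intro exI[of _ "nat a"] exI[of _ "nat b"]) auto
qed

lemma rat_pos_nat:
  assumes "0 < r"
  shows "\<exists>a b :: nat. b > 0 \<and> real_of_rat r = real a / real b"
proof -
  obtain a b where q: "quotient_of r = (a, b)" by (cases "quotient_of r") auto
  have rb: "r = of_int a / of_int b" using quotient_of_div[OF q] .
  have b0: "b > 0" using quotient_of_denom_pos[OF q] .
  have a0: "a > 0" using assms rb b0 by (simp add: zero_less_divide_iff)
  have "real_of_rat r = real (nat a) / real (nat b)"
    using rb a0 b0 by (simp add: of_rat_divide)
  thus ?thesis using b0 by (intro exI[of _ "nat a"] exI[of _ "nat b"]) auto
qed

lemma c1:
  fixes D E M X Y :: real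
  assumes D0: "D > 0" and E0: "0 < E" and EM: "E < M" and rel: "E * (X + D) = M * (X - D)"
    and eq: "Y ^ 2 = X ^ 3 - D ^ 2 * X"
  shows "X = D * (M + E) / (M - E)"
    "Y ^ 2 = (2 * sqrt (D * (E * M) / (M ^ 2 - E ^ 2)) * X) ^ 2"
proof -
  have ME: "M - E > 0" using EM by simp
  have "X * (M - E) = D * (M + E)" using rel by (simp add: algebra_simps)
  thus X: "X = D * (M + E) / (M - E)" using ME by (simp add: field_simps)
  have pos: "M ^ 2 - E ^ 2 > 0" using E0 EM power_strict_mono[of E M 2] by simp
  have s2: "(sqrt (D * (E * M) / (M ^ 2 - E ^ 2))) ^ 2 = D * (E * M) / (M ^ 2 - E ^ 2)"
    using pos D0 E0 EM by simp
  have MP: "M + E > 0" using E0 EM by simp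
  have "M ^ 2 - E ^ 2 = (M - E) * (M + E)" by (simp add: power2_eq_square algebra_simps)
  have "Y ^ 2 = X * (X - D) * (X + D)" using eq by (simp add: power2_eq_square power3_eq_cube algebra_simps)
  also have "X - D = D * (2 * E) / (M - E)" using X ME by (simp add: field_simps)
  also have "X + D = D * (2 * M) / (M - E)" using X ME by (simp add: field_simps)
  finally have Y2: "Y ^ 2 = X * (D * (2 * E) / (M - E)) * (D * (2 * M) / (M - E))" .
  have "(2 * sqrt (D * (E * M) / (M ^ 2 - E ^ 2)) * X) ^ 2 = 4 * (sqrt (D * (E * M) / (M ^ 2 - E ^ 2))) ^ 2 * X * X"
    by (simp only: power_mult_distrib power2_eq_square[of X]) simp
  also have "\<dots> = 4 * (D * (E * M) / (M ^ 2 - E ^ 2)) * X * X"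
    unfolding s2 ..
  also have "\<dots> = 4 * (D * (E * M) / ((M - E) * (M + E))) * X * X"
    unfolding \<open>M ^ 2 - E ^ 2 = _\<close> ..
  also have "\<dots> = 4 * (D * (E * M) / ((M - E) * (M + E))) * X * (D * (M + E) / (M - E))"
    using X by simp
  also have "\<dots> = Y ^ 2" unfolding Y2 using ME MP by (simp add: divide_simps)
  finally show "Y ^ 2 = (2 * sqrt (D * (E * M) / (M ^ 2 - E ^ 2)) * X) ^ 2" ..
qed
lemma c2:
  fixes D E M X Y :: real
  assumes D0: "D > 0" and E0: "0 < E" and EM: "E < M" and rel: "M * (X + D) = E * (D - X)"
    and eq: "Y ^ 2 = X ^ 3 - D ^ 2 * X"
  shows "X = - D * (M - E) / (M + E)"
    "Y ^ 2 = (2 * sqrt (D * (E * M) / (M ^ 2 - E ^ 2)) * (D * (M - E) / (M + E))) ^ 2"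
proof -
  have MP: "M + E > 0" using E0 EM by simp
  have ME: "M - E > 0" using EM by simp
  have "X * (M + E) = - D * (M - E)" using rel by (simp add: algebra_simps)
  thus X: "X = - D * (M - E) / (M + E)" using MP by (simp add: field_simps)
  have pos: "M ^ 2 - E ^ 2 > 0" using E0 EM power_strict_mono[of E M 2] by simp
  have s2: "(sqrt (D * (E * M) / (M ^ 2 - E ^ 2))) ^ 2 = D * (E * M) / (M ^ 2 - E ^ 2)"
    using pos D0 E0 EM by simp
  have "M ^ 2 - E ^ 2 = (M - E) * (M + E)" by (simp add: power2_eq_square algebra_simps)
  have "Y ^ 2 = X * (X - D) * (X + D)" using eq by (simp add: power2_eq_square power3_eq_cube algebra_simps)
  also have "X - D = - D * (2 * M) / (M + E)" using X MP by (simp add: field_simps)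
  also have "X + D = D * (2 * E) / (M + E)" using X MP by (simp add: field_simps)
  finally have Y2: "Y ^ 2 = X * (- D * (2 * M) / (M + E)) * (D * (2 * E) / (M + E))" .
  have "(2 * sqrt (D * (E * M) / (M ^ 2 - E ^ 2)) * (D * (M - E) / (M + E))) ^ 2
      = 4 * (sqrt (D * (E * M) / (M ^ 2 - E ^ 2))) ^ 2 * (D * (M - E) / (M + E)) * (D * (M - E) / (M + E))"
    by (simp only: power_mult_distrib power2_eq_square[of "D * (M - E) / (M + E)"]) simp
  also have "\<dots> = 4 * (D * (E * M) / (M ^ 2 - E ^ 2)) * (D * (M - E) / (M + E)) * (D * (M - E) / (M + E))"
    unfolding s2 ..
  also have "\<dots> = 4 * (D * (E * M) / ((M - E) * (M + E))) * (D * (M - E) / (M + E)) * (D * (M - E) / (M + E))"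
    unfolding \<open>M ^ 2 - E ^ 2 = _\<close> ..
  also have "\<dots> = Y ^ 2" unfolding Y2 X using ME MP by (simp add: divide_simps)
  finally show "Y ^ 2 = (2 * sqrt (D * (E * M) / (M ^ 2 - E ^ 2)) * (D * (M - E) / (M + E))) ^ 2" ..
qed

lemma kj:
  fixes D E M s :: real
  assumes "D > 0" "0 < E" "E < M" "s = sqrt (D * (E * M) / (M ^ 2 - E ^ 2))"
    "s = real_of_rat q" "q > 0"
  shows "\<exists>k j :: nat. D = (real k / (2 * real j)) ^ 2 * ((M ^ 2 - E ^ 2) / (E * M))"
proof -
  obtain a b :: nat where b: "b > 0" "real_of_rat q = a / b" using rat_pos_nat[OF assms(6)] by blast
  have pos: "M ^ 2 - E ^ 2 > 0" using assms using power_strict_mono[of E M 2] by simp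
  have "s ^ 2 = D * (E * M) / (M ^ 2 - E ^ 2)" using assms pos by simp
  hence "D = s ^ 2 * ((M ^ 2 - E ^ 2) / (E * M))" using pos assms by (simp add: field_simps)
  moreover have "s = real (2 * a) / (2 * real b)" using b assms by simp
  ultimately show ?thesis by blast
qed

theorem lemma10:
  fixes d :: int and x y :: rat
  assumes "d > 0" and "x \<noteq> 0" and "y \<noteq> 0"
    and "y ^ 2 = x ^ 3 - (of_int d) ^ 2 * x"
  shows "\<exists>e m :: nat. 0 < e \<and> m > e \<and> gcd m e = 1 \<and>
           (\<exists>k j :: nat. real_of_int d =
               (real k / (2 * real j)) ^ 2 * ((real m ^ 2 - real e ^ 2) / (real e * real m))) \<and>
           (let D = real_of_int d;
                s = sqrt (D * (real e * real m) / (real m ^ 2 - real e ^ 2))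
            in \<exists>\<sigma> \<in> {1, -1 :: real}.
                 (real_of_rat x = D * (real m + real e) / (real m - real e) \<and>
                  real_of_rat y = \<sigma> * 2 * s * (D * (real m + real e) / (real m - real e)))
               \<or> (real_of_rat x = - D * (real m - real e) / (real m + real e) \<and>
                  real_of_rat y = - \<sigma> * 2 * s * (D * (real m - real e) / (real m + real e))))"
proof -
  define D where "D = real_of_int d"
  define X where "X = real_of_rat x"
  define Y where "Y = real_of_rat y"
  have D0: "D > 0" using assms D_def by simp
  have X0: "X \<noteq> 0" using assms X_def by simp
  have eq: "Y ^ 2 = X ^ 3 - D ^ 2 * X"
  proof -
    have "real_of_rat (y ^ 2) = real_of_rat (x ^ 3 - (of_int d) ^ 2 * x)" using assms(4) by simp
    thus ?thesis unfolding X_def Y_def D_def by (simp add: of_rat_diff of_rat_mult of_rat_power)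
  qed
  have dpos: "of_int d > (0::rat)" using assms by simp
  have ypos: "y ^ 2 > 0" using assms(3) by simp
  have h1: "x ^ 3 - (of_int d) ^ 2 * x > 0" using ypos unfolding assms(4) .
  have "x * (x ^ 2 - (of_int d) ^ 2) = x ^ 3 - (of_int d) ^ 2 * x"
    by (simp add: algebra_simps power3_eq_cube power2_eq_square)
  hence prod: "x * (x ^ 2 - (of_int d) ^ 2) > 0" using h1 by simp
  obtain e m :: nat where em: "0 < e" "e < m" "gcd m e = 1" and
    main: "\<exists>\<sigma> \<in> {1, -1 :: real}.
         (X = D * (real m + real e) / (real m - real e) \<and>
          Y = \<sigma> * 2 * sqrt (D * (real e * real m) / (real m ^ 2 - real e ^ 2)) * (D * (real m + real e) / (real m - real e)))
       \<or> (X = - D * (real m - real e) / (real m + real e) \<and>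
          Y = - \<sigma> * 2 * sqrt (D * (real e * real m) / (real m ^ 2 - real e ^ 2)) * (D * (real m - real e) / (real m + real e)))"
    and sq: "sqrt (D * (real e * real m) / (real m ^ 2 - real e ^ 2)) = real_of_rat (\<bar>y\<bar> / (2 * \<bar>x\<bar>))"
  proof (cases "x > 0")
    case True
    have "x ^ 2 > (of_int d) ^ 2" using prod True by (simp add: zero_less_mult_iff)
    from this True[THEN less_imp_le] have xd: "x > of_int d" by (rule power_less_imp_less_base)
    define r where "r = (x - of_int d) / (x + of_int d)"
    have p1: "x - of_int d > 0" "x + of_int d > 0" using xd dpos by simp_all
    have r0: "0 < r" unfolding r_def using p1 by simp
    have r1: "r < 1" unfolding r_def using p1 dpos by (simp add: divide_less_eq)
    from rat_frac_nat[OF r0 r1] obtain e m :: nat where em: "0 < e" "e < m" "gcd m e = 1" "real_of_rat r = real e / real m"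
      by (elim exE conjE)
    define E M where "E = real e" and "M = real m"
    have E0: "E > 0" and EM: "E < M" unfolding E_def M_def using em(1,2) by simp_all
    have "real_of_rat r = (X - D) / (X + D)" unfolding r_def X_def D_def by (simp add: of_rat_divide of_rat_diff of_rat_add)
    hence q: "E / M = (X - D) / (X + D)" using em E_def M_def by simp
    have "X > 0" using True X_def by simp
    hence "X + D > 0" using D0 by simp
    hence rel: "E * (X + D) = M * (X - D)" using q E0 EM by (simp add: divide_simps)
    note cc = c1[OF D0 E0 EM rel eq]
    define s where "s = sqrt (D * (E * M) / (M ^ 2 - E ^ 2))"
    have s0: "s \<ge> 0" unfolding s_def using D0 E0 EM power_strict_mono[of E M 2] by simp
    have Ys: "Y = 2 * s * X \<or> Y = - (2 * s * X)" using cc(2) unfolding s_def[symmetric]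
      by (simp add: power2_eq_iff)
    have "\<bar>Y\<bar> = 2 * s * \<bar>X\<bar>" using Ys s0 by (auto simp: abs_mult)
    hence "s = \<bar>Y\<bar> / (2 * \<bar>X\<bar>)" using X0 by simp
    hence sq: "s = real_of_rat (\<bar>y\<bar> / (2 * \<bar>x\<bar>))" unfolding X_def Y_def by (simp add: of_rat_divide of_rat_mult)
    have mn: "\<exists>\<sigma> \<in> {1, -1 :: real}. (X = D * (M + E) / (M - E) \<and> Y = \<sigma> * 2 * s * (D * (M + E) / (M - E)))"
    proof (cases "Y = 2 * s * X")
      case True thus ?thesis using cc(1) by (intro bexI[of _ 1]) auto
    next
      case False thus ?thesis using cc(1) Ys by (intro bexI[of _ "-1"]) auto
    qed
    show ?thesis
      apply (rule that[OF em(1-3)])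
      using mn sq unfolding E_def M_def s_def by blast+
  next
    case False
    hence xn: "x < 0" using assms(2) by simp
    have "x ^ 2 - (of_int d) ^ 2 < 0" using prod xn by (simp add: zero_less_mult_iff)
    hence "x ^ 2 < (of_int d) ^ 2" by simp
    hence "(- x) ^ 2 < (of_int d) ^ 2" by simp
    from this dpos[THEN less_imp_le] have xd: "- x < of_int d" by (rule power_less_imp_less_base)
    define r where "r = (x + of_int d) / (of_int d - x)"
    have p1: "x + of_int d > 0" "of_int d - x > 0" using xd dpos xn by simp_all
    have r0: "0 < r" unfolding r_def using p1 by simp
    have r1: "r < 1" unfolding r_def using p1 xn by (simp add: divide_less_eq)
    from rat_frac_nat[OF r0 r1] obtain e m :: nat where em: "0 < e" "e < m" "gcd m e = 1" "real_of_rat r = real e / real m"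
      by (elim exE conjE)
    define E M where "E = real e" and "M = real m"
    have E0: "E > 0" and EM: "E < M" unfolding E_def M_def using em(1,2) by simp_all
    have "real_of_rat r = (X + D) / (D - X)" unfolding r_def X_def D_def by (simp add: of_rat_divide of_rat_diff of_rat_add)
    hence q: "E / M = (X + D) / (D - X)" using em E_def M_def by simp
    have "X < 0" using xn X_def by simp
    hence "D - X > 0" using D0 by simp
    hence rel: "M * (X + D) = E * (D - X)" using q E0 EM by (simp add: divide_simps)
    note cc = c2[OF D0 E0 EM rel eq]
    define s where "s = sqrt (D * (E * M) / (M ^ 2 - E ^ 2))"
    define Z where "Z = D * (M - E) / (M + E)"
    have s0: "s \<ge> 0" unfolding s_def using D0 E0 EM power_strict_mono[of E M 2] by simp
    have XZ: "X = - Z" using cc(1) unfolding Z_def by simp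
    have Ys: "Y = 2 * s * Z \<or> Y = - (2 * s * Z)" using cc(2) unfolding s_def[symmetric] Z_def[symmetric]
      by (simp add: power2_eq_iff)
    have "\<bar>Y\<bar> = 2 * s * \<bar>X\<bar>" using Ys s0 XZ by (auto simp: abs_mult)
    hence "s = \<bar>Y\<bar> / (2 * \<bar>X\<bar>)" using X0 by simp
    hence sq: "s = real_of_rat (\<bar>y\<bar> / (2 * \<bar>x\<bar>))" unfolding X_def Y_def by (simp add: of_rat_divide of_rat_mult)
    have mn: "\<exists>\<sigma> \<in> {1, -1 :: real}. (X = - D * (M - E) / (M + E) \<and> Y = - \<sigma> * 2 * s * Z)"
    proof (cases "Y = 2 * s * Z")
      case True thus ?thesis using cc(1) by (intro bexI[of _ "-1"]) auto
    next
      case False thus ?thesis using cc(1) Ys by (intro bexI[of _ "1"]) auto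
    qed
    show ?thesis
      apply (rule that[OF em(1-3)])
      using mn sq unfolding E_def M_def s_def Z_def by blast+
  qed
  have kjf: "\<exists>k j :: nat. D = (real k / (2 * real j)) ^ 2 * ((real m ^ 2 - real e ^ 2) / (real e * real m))"
    by (rule kj[OF D0 _ _ refl sq]) (use assms em in auto)
  show ?thesis
    unfolding Let_def D_def[symmetric] X_def[symmetric] Y_def[symmetric]
    apply (rule exI[of _ e], rule exI[of _ m])
    using em(1,2,3) kjf main by (intro conjI)
qed

end
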